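(* Let $p\ge 0$ be an integer, $n=2p+1$, and define $N_p(R)=\sum_{\sigma\in X_{p+1}}W_2(\sigma,R)$ and $D_p(R)=\sum_{\sigma\in X_{p-1}}W_0(\sigma,R)$. Then (1) $N_p(R)$ is a monic polynomial of degree $\frac{(p+1)(p+2)}{2}$ all of whose coefficients (of $R^i$, $0\le i\le\frac{(p+1)(p+2)}{2}$) are positive; (2) $D_p(R)$ is a monic polynomial of degree $\frac{p(p-1)}{2}$ all of whose coefficients are positive; (3) $N_p(0)=n!\,D_p(0)$.
   Context: A Schröder path is a finite directed path in $\mathbb{Z}^2$ each of whose steps is an ascent $(x,y)\to(x+1,y+1)$, a descent $(x,y)\to(x+1,y-1)$, or a flat step $(x,y)\to(x+2,y)$ (the empty path is allowed). Let $P_i=(-i,i)$, $Q_i=(i,i)$. For $k\ge 0$, $X_k$ is the set of collections of $k+1$ pairwise vertex-disjoint Schröder paths from $\{P_i\}_{i=0}^k$ to $\{Q_i\}_{i=0}^k$; $X_{-1}$ consists only of the empty collection. $W_0(\sigma,R)$ is the product over all steps of $\sigma$ of: $1$ per ascent, $R$ per flat step, $y+1$ per descent starting at height $y$. $W_2(\sigma,R)$ is the same but with $y-1$ per descent starting at height $y$. Empty products are $1$. *)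

theory Defs
  imports Main "HOL-Computational_Algebra.Polynomial"
begin

datatype step = Asc | Desc | Flat

fun step_move :: "int \<times> int \<Rightarrow> step \<Rightarrow> int \<times> int" where
  "step_move (x, y) Asc = (x + 1, y + 1)"
| "step_move (x, y) Desc = (x + 1, y - 1)"
| "step_move (x, y) Flat = (x + 2, y)"

fun path_vertices :: "int \<times> int \<Rightarrow> step list \<Rightarrow> (int \<times> int) set" where
  "path_vertices a [] = {a}"
| "path_vertices a (s # ss) = insert a (path_vertices (step_move a s) ss)"

fun path_end :: "int \<times> int \<Rightarrow> step list \<Rightarrow> int \<times> int" where
  "path_end a [] = a"
| "path_end a (s # ss) = path_end (step_move a s) ss"

definition P :: "nat \<Rightarrow> int \<times> int" where "P i = (- int i, int i)"
definition Q :: "nat \<Rightarrow> int \<times> int" where "Q i = (int i, int i)"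

text \<open>Thus X_k = families (k+1),
  and families 0 = {the empty collection} = X_(-1).\<close>
definition families :: "nat \<Rightarrow> (nat \<Rightarrow> step list) set" where
  "families m = {f. (\<forall>i\<ge>m. f i = [])
     \<and> (\<forall>i<m. \<exists>j<m. path_end (P i) (f i) = Q j)
     \<and> (\<forall>i<m. \<forall>j<m. i \<noteq> j \<longrightarrow> path_end (P i) (f i) \<noteq> path_end (P j) (f j))
     \<and> (\<forall>i<m. \<forall>j<m. i \<noteq> j \<longrightarrow> path_vertices (P i) (f i) \<inter> path_vertices (P j) (f j) = {})}"

fun path_weight :: "(int \<Rightarrow> int) \<Rightarrow> int \<times> int \<Rightarrow> step list \<Rightarrow> int poly" where
  "path_weight c a [] = 1"
| "path_weight c a (Asc # ss) = path_weight c (step_move a Asc) ss"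
| "path_weight c a (Flat # ss) = [:0, 1:] * path_weight c (step_move a Flat) ss"
| "path_weight c a (Desc # ss) = [: c (snd a) :] * path_weight c (step_move a Desc) ss"

definition W0 :: "nat \<Rightarrow> (nat \<Rightarrow> step list) \<Rightarrow> int poly" where
  "W0 m f = (\<Prod>i<m. path_weight (\<lambda>y. y + 1) (P i) (f i))"

definition W2 :: "nat \<Rightarrow> (nat \<Rightarrow> step list) \<Rightarrow> int poly" where
  "W2 m f = (\<Prod>i<m. path_weight (\<lambda>y. y - 1) (P i) (f i))"

definition Npoly :: "nat \<Rightarrow> int poly" where
  "Npoly p = (\<Sum>f\<in>families (p + 2). W2 (p + 2) f)"

definition Dpoly :: "nat \<Rightarrow> int poly" where
  "Dpoly p = (\<Sum>f\<in>families p. W0 p f)"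

end

theory Submission
  imports Defs
begin


fun na :: "step list \<Rightarrow> nat" where
  "na [] = 0" | "na (Asc # ss) = Suc (na ss)" | "na (Desc # ss) = na ss" | "na (Flat # ss) = na ss"
fun nd :: "step list \<Rightarrow> nat" where
  "nd [] = 0" | "nd (Asc # ss) = nd ss" | "nd (Desc # ss) = Suc (nd ss)" | "nd (Flat # ss) = nd ss"
fun nf :: "step list \<Rightarrow> nat" where
  "nf [] = 0" | "nf (Asc # ss) = nf ss" | "nf (Desc # ss) = nf ss" | "nf (Flat # ss) = Suc (nf ss)"

fun dw :: "(int \<Rightarrow> int) \<Rightarrow> int \<times> int \<Rightarrow> step list \<Rightarrow> int" where
  "dw c a [] = 1"
| "dw c a (Asc # ss) = dw c (step_move a Asc) ss"
| "dw c a (Flat # ss) = dw c (step_move a Flat) ss"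
| "dw c a (Desc # ss) = c (snd a) * dw c (step_move a Desc) ss"

lemma counts_app[simp]: "na (xs @ ys) = na xs + na ys" "nd (xs @ ys) = nd xs + nd ys" "nf (xs @ ys) = nf xs + nf ys"
  by (induction xs rule: na.induct; simp)+

lemma counts_rep[simp]:
  "na (replicate n Asc) = n" "nd (replicate n Asc) = 0" "nf (replicate n Asc) = 0"
  "na (replicate n Desc) = 0" "nd (replicate n Desc) = n" "nf (replicate n Desc) = 0"
  "na (replicate n Flat) = 0" "nd (replicate n Flat) = 0" "nf (replicate n Flat) = n"
  by (induction n; simp)+

lemma length_counts: "length ss = na ss + nd ss + nf ss"
  by (induction ss rule: na.induct) auto

lemma pw_monom: "path_weight c a ss = monom (dw c a ss) (nf ss)"
proof (induction c a ss rule: path_weight.induct)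
  case (1 c a) then show ?case by (simp add: monom_0 one_pCons)
next
  case (2 c a ss) then show ?case by simp
next
  case (3 c a ss)
  have "[:0,1:] = (monom 1 1 :: int poly)" by (simp add: monom_Suc monom_0 one_pCons)
  then show ?case using 3 by (simp add: mult_monom)
next
  case (4 c a ss) then show ?case by (simp add: smult_monom)
qed

lemma path_end_formula:
  "path_end (x, y) ss = (x + int (na ss + nd ss + 2 * nf ss), y + int (na ss) - int (nd ss))"
  by (induction ss arbitrary: x y rule: na.induct) auto

lemma path_end_app[simp]: "path_end a (xs @ ys) = path_end (path_end a xs) ys"
  by (induction xs arbitrary: a) auto


lemma end_in_pv: "path_end a xs \<in> path_vertices a xs"
  by (induction xs arbitrary: a) auto

lemma start_in_pv: "a \<in> path_vertices a xs"
  by (cases xs) auto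

lemma pv_app: "path_vertices a (xs @ ys) = path_vertices a xs \<union> path_vertices (path_end a xs) ys"
  by (induction xs arbitrary: a) (auto simp: start_in_pv)

lemma dw_app: "dw c a (xs @ ys) = dw c a xs * dw c (path_end a xs) ys"
  by (induction c a xs rule: dw.induct) auto

lemma dw_rep[simp]: "dw c a (replicate n Asc) = 1" "dw c a (replicate n Flat) = 1"
  by (induction n arbitrary: a) auto

lemma dw_rep_desc: "dw c (x, y) (replicate n Desc) = (\<Prod>s<n. c (y - int s))"
proof (induction n arbitrary: x y)
  case 0 then show ?case by simp
next
  case (Suc n)
  have "dw c (x, y) (replicate (Suc n) Desc) = c y * dw c (x+1, y-1) (replicate n Desc)" by simp
  also have "\<dots> = c y * (\<Prod>s<n. c (y - int (Suc s)))" using Suc[of "x+1" "y-1"] by (simp add: algebra_simps)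
  also have "\<dots> = (\<Prod>s<Suc n. c (y - int s))" by (simp only: prod.lessThan_Suc_shift) simp
  finally show ?case .
qed

lemma pv_rep_asc: "path_vertices (x, y) (replicate n Asc) \<subseteq> {p. \<exists>s. 0 \<le> s \<and> s \<le> int n \<and> p = (x + s, y + s)}"
proof (induction n arbitrary: x y)
  case 0 then show ?case by auto
next
  case (Suc n)
  have "path_vertices (x, y) (replicate (Suc n) Asc) = insert (x,y) (path_vertices (x+1, y+1) (replicate n Asc))" by simp
  also have "\<dots> \<subseteq> {p. \<exists>s. 0 \<le> s \<and> s \<le> int (Suc n) \<and> p = (x + s, y + s)}"
  proof
    fix q assume "q \<in> insert (x,y) (path_vertices (x+1, y+1) (replicate n Asc))"
    then consider "q = (x,y)" | "q \<in> path_vertices (x+1, y+1) (replicate n Asc)" by blast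
    then show "q \<in> {p. \<exists>s. 0 \<le> s \<and> s \<le> int (Suc n) \<and> p = (x + s, y + s)}"
    proof cases
      case 1 then show ?thesis by (auto intro!: exI[of _ 0])
    next
      case 2 then obtain s where "0 \<le> s" "s \<le> int n" "q = (x+1+s, y+1+s)" using Suc by blast
      then show ?thesis by (auto intro!: exI[of _ "s+1"])
    qed
  qed
  finally show ?case .
qed

lemma pv_rep_desc: "path_vertices (x, y) (replicate n Desc) \<subseteq> {p. \<exists>s. 0 \<le> s \<and> s \<le> int n \<and> p = (x + s, y - s)}"
proof (induction n arbitrary: x y)
  case 0 then show ?case by auto
next
  case (Suc n)
  have "path_vertices (x, y) (replicate (Suc n) Desc) = insert (x,y) (path_vertices (x+1, y-1) (replicate n Desc))" by simp
  also have "\<dots> \<subseteq> {p. \<exists>s. 0 \<le> s \<and> s \<le> int (Suc n) \<and> p = (x + s, y - s)}"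
  proof
    fix q assume "q \<in> insert (x,y) (path_vertices (x+1, y-1) (replicate n Desc))"
    then consider "q = (x,y)" | "q \<in> path_vertices (x+1, y-1) (replicate n Desc)" by blast
    then show "q \<in> {p. \<exists>s. 0 \<le> s \<and> s \<le> int (Suc n) \<and> p = (x + s, y - s)}"
    proof cases
      case 1 then show ?thesis by (auto intro!: exI[of _ 0])
    next
      case 2 then obtain s where "0 \<le> s" "s \<le> int n" "q = (x+1+s, y-1-s)" using Suc by blast
      then show ?thesis by (auto intro!: exI[of _ "s+1"])
    qed
  qed
  finally show ?case .
qed

lemma pv_rep_flat: "path_vertices (x, y) (replicate n Flat) \<subseteq> {p. \<exists>s. 0 \<le> s \<and> s \<le> int n \<and> p = (x + 2*s, y)}"
proof (induction n arbitrary: x y)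
  case 0 then show ?case by auto
next
  case (Suc n)
  have "path_vertices (x, y) (replicate (Suc n) Flat) = insert (x,y) (path_vertices (x+2, y) (replicate n Flat))" by simp
  also have "\<dots> \<subseteq> {p. \<exists>s. 0 \<le> s \<and> s \<le> int (Suc n) \<and> p = (x + 2*s, y)}"
  proof
    fix q assume "q \<in> insert (x,y) (path_vertices (x+2, y) (replicate n Flat))"
    then consider "q = (x,y)" | "q \<in> path_vertices (x+2, y) (replicate n Flat)" by blast
    then show "q \<in> {p. \<exists>s. 0 \<le> s \<and> s \<le> int (Suc n) \<and> p = (x + 2*s, y)}"
    proof cases
      case 1 then show ?thesis by (auto intro!: exI[of _ 0])
    next
      case 2 then obtain s where "0 \<le> s" "s \<le> int n" "q = (x+2+2*s, y)" using Suc by blast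
      then show ?thesis by (auto intro!: exI[of _ "s+1"])
    qed
  qed
  finally show ?case .
qed



definition sh :: "nat \<Rightarrow> nat \<Rightarrow> step list" where
  "sh i g = replicate (i - g) Asc @ replicate g Flat @ replicate (i - g) Desc"

definition Vset :: "int \<Rightarrow> int \<Rightarrow> (int \<times> int) set" where
  "Vset i g = {(x,y). (\<exists>s. 0 \<le> s \<and> s \<le> i - g \<and> x = -i + s \<and> y = i + s)
      \<or> (\<exists>t. 0 \<le> t \<and> t \<le> g \<and> x = -g + 2*t \<and> y = 2*i - g)
      \<or> (\<exists>s. 0 \<le> s \<and> s \<le> i - g \<and> x = g + s \<and> y = 2*i - g - s)}"

lemma sh_end1: "g \<le> i \<Longrightarrow> path_end (P i) (replicate (i - g) Asc) = (- int g, 2 * int i - int g)"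
  by (simp add: P_def path_end_formula)
lemma sh_end2: "g \<le> i \<Longrightarrow> path_end (P i) (replicate (i - g) Asc @ replicate g Flat) = (int g, 2 * int i - int g)"
  by (simp add: P_def path_end_formula)

lemma sh_end: "g \<le> i \<Longrightarrow> path_end (P i) (sh i g) = Q i"
  by (simp add: sh_def P_def Q_def path_end_formula)

lemma sh_counts: "g \<le> i \<Longrightarrow> nf (sh i g) = g"
  by (simp add: sh_def)

lemma sh_pv: assumes "g \<le> i" shows "path_vertices (P i) (sh i g) \<subseteq> Vset (int i) (int g)"
proof -
  have e: "path_vertices (P i) (sh i g) = path_vertices (- int i, int i) (replicate (i - g) Asc)
     \<union> path_vertices (- int g, 2 * int i - int g) (replicate g Flat)
     \<union> path_vertices (int g, 2 * int i - int g) (replicate (i - g) Desc)"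
    unfolding sh_def using sh_end1[OF assms] sh_end2[OF assms]
    by (simp add: pv_app P_def Un_assoc)
  show ?thesis unfolding e
    using pv_rep_asc[of "- int i" "int i" "i - g"] pv_rep_flat[of "- int g" "2 * int i - int g" g]
      pv_rep_desc[of "int g" "2 * int i - int g" "i - g"] assms
    unfolding Vset_def by (auto simp: of_nat_diff)
qed

lemma Vset_disj:
  fixes a b ga gb :: int
  assumes "a < b" "0 \<le> ga" "ga \<le> a" "0 \<le> gb" "gb \<le> b" "gb < ga + 2*(b - a)"
  shows "Vset a ga \<inter> Vset b gb = {}"
  using assms unfolding Vset_def by auto

lemma sh_dw: "g \<le> i \<Longrightarrow> dw c (P i) (sh i g) = (\<Prod>s<i-g. c (2 * int i - int g - int s))"
  unfolding sh_def using sh_end2 by (simp add: dw_app dw_rep_desc P_def)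

definition gg :: "nat \<Rightarrow> nat \<Rightarrow> nat \<Rightarrow> nat" where
  "gg r v i = (if i < r then i else if i = r then v else 0)"

definition famr :: "nat \<Rightarrow> nat \<Rightarrow> nat \<Rightarrow> nat \<Rightarrow> step list" where
  "famr r v m i = (if i < m then sh i (gg r v i) else [])"

lemma gg_le: "v \<le> r \<Longrightarrow> gg r v i \<le> i"
  by (simp add: gg_def)

lemma gg_cond: "v \<le> r \<Longrightarrow> a < b \<Longrightarrow> int (gg r v b) < int (gg r v a) + 2 * (int b - int a)"
  by (simp add: gg_def)

lemma famr_in: assumes "v \<le> r" shows "famr r v m \<in> families m"
proof -
  have ends: "\<And>i. i < m \<Longrightarrow> path_end (P i) (famr r v m i) = Q i"
    using sh_end gg_le[OF assms] by (simp add: famr_def)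
  have pvs: "\<And>i. i < m \<Longrightarrow> path_vertices (P i) (famr r v m i) \<subseteq> Vset (int i) (int (gg r v i))"
    using sh_pv gg_le[OF assms] by (simp add: famr_def)
  have disj: "path_vertices (P i) (famr r v m i) \<inter> path_vertices (P j) (famr r v m j) = {}"
    if "i < m" "j < m" "i < j" for i j
  proof -
    have "Vset (int i) (int (gg r v i)) \<inter> Vset (int j) (int (gg r v j)) = {}"
      apply (rule Vset_disj)
      using that gg_le[OF assms, of i] gg_le[OF assms, of j] gg_cond[OF assms that(3)] by auto
    then show ?thesis using pvs[OF that(1)] pvs[OF that(2)] by blast
  qed
  show ?thesis unfolding families_def
  proof (intro CollectI conjI allI impI)
    fix i assume "m \<le> i" then show "famr r v m i = []" by (simp add: famr_def)
  next
    fix i assume "i < m" then show "\<exists>j<m. path_end (P i) (famr r v m i) = Q j" using ends by blast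
  next
    fix i j assume "i < m" "j < m" "i \<noteq> j"
    then show "path_end (P i) (famr r v m i) \<noteq> path_end (P j) (famr r v m j)"
      using ends by (simp add: Q_def)
  next
    fix i j assume "i < m" "j < m" "i \<noteq> j"
    then show "path_vertices (P i) (famr r v m i) \<inter> path_vertices (P j) (famr r v m j) = {}"
      using disj by (metis Int_commute linorder_neqE_nat)
  qed
qed



lemma step_UNIV: "(UNIV :: step set) = {Asc, Desc, Flat}"
  using step.exhaust by auto

lemma fam_end:
  assumes "f \<in> families m" "i < m"
  shows "\<exists>j<m. path_end (P i) (f i) = Q j \<and> nd (f i) + nf (f i) = i \<and> na (f i) + i = j + nd (f i)"
proof -
  obtain j where j: "j < m" "path_end (P i) (f i) = Q j" using assms unfolding families_def by blast
  then show ?thesis by (auto simp: path_end_formula P_def Q_def)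
qed

lemma families_finite: "finite (families m)"
proof -
  let ?B = "{xs :: step list. set xs \<subseteq> UNIV \<and> length xs \<le> 2*m}"
  have fB: "finite ?B" by (rule finite_lists_length_le) (simp add: step_UNIV)
  have "families m \<subseteq> {f. \<forall>x. (x \<in> {..<m} \<longrightarrow> f x \<in> ?B) \<and> (x \<notin> {..<m} \<longrightarrow> f x = [])}"
  proof (intro subsetI CollectI allI)
    fix f x assume f: "f \<in> families m"
    have 1: "f x \<in> ?B" if xin: "x \<in> {..<m}"
    proof -
      obtain j where "j < m" "nd (f x) + nf (f x) = x" "na (f x) + x = j + nd (f x)"
        using fam_end[OF f, of x] xin by auto
      then show "f x \<in> ?B" using xin by (simp add: length_counts)
    qed
    have 2: "f x = []" if "x \<notin> {..<m}" using f that unfolding families_def by auto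
    show "(x \<in> {..<m} \<longrightarrow> f x \<in> ?B) \<and> (x \<notin> {..<m} \<longrightarrow> f x = [])" using 1 2 by blast
  qed
  then show ?thesis using finite_subset finite_set_of_finite_funs[OF finite_lessThan fB] by blast
qed

lemma dw_nonneg:
  assumes "\<And>y. y \<ge> 1 \<Longrightarrow> c y \<ge> 0"
  shows "snd a \<ge> int (nd ss) \<Longrightarrow> dw c a ss \<ge> 0"
proof (induction ss arbitrary: a)
  case Nil then show ?case by simp
next
  case (Cons s ss)
  obtain x y where a: "a = (x,y)" by force
  show ?case
  proof (cases s)
    case Asc then show ?thesis using Cons.IH[of "(x+1,y+1)"] Cons.prems by (simp add: a)
  next
    case Flat then show ?thesis using Cons.IH[of "(x+2,y)"] Cons.prems by (simp add: a)
  next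
    case Desc
    have 1: "dw c (x+1,y-1) ss \<ge> 0" using Cons.IH[of "(x+1,y-1)"] Cons.prems Desc by (simp add: a)
    have "y \<ge> 1" using Cons.prems Desc by (simp add: a)
    then have "c y \<ge> 0" using assms by blast
    then show ?thesis using 1 Desc by (simp add: a)
  qed
qed



lemma prod_monom: "finite I \<Longrightarrow> (\<Prod>i\<in>I. monom (a i) (n i) :: int poly) = monom (\<Prod>i\<in>I. a i) (\<Sum>i\<in>I. n i)"
  by (induction I rule: finite_induct) (auto simp: mult_monom monom_0 one_pCons)

definition Af :: "(int \<Rightarrow> int) \<Rightarrow> nat \<Rightarrow> (nat \<Rightarrow> step list) \<Rightarrow> int" where
  "Af c m f = (\<Prod>i<m. dw c (P i) (f i))"
definition Ff :: "nat \<Rightarrow> (nat \<Rightarrow> step list) \<Rightarrow> nat" where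
  "Ff m f = (\<Sum>i<m. nf (f i))"

lemma W_monom: "(\<Prod>i<m. path_weight c (P i) (f i)) = monom (Af c m f) (Ff m f)"
  unfolding Af_def Ff_def pw_monom by (rule prod_monom) simp

lemma coeff_Pc: "coeff (\<Sum>f\<in>families m. \<Prod>i<m. path_weight c (P i) (f i)) k
   = (\<Sum>f\<in>families m. if Ff m f = k then Af c m f else 0)"
  by (simp add: W_monom coeff_sum coeff_monom)

definition sig :: "(nat \<Rightarrow> step list) \<Rightarrow> nat \<Rightarrow> nat" where
  "sig f i = nat (snd (path_end (P i) (f i)))"

lemma sig_prop: assumes "f \<in> families m" "i < m"
  shows "sig f i < m \<and> path_end (P i) (f i) = Q (sig f i) \<and> nd (f i) + nf (f i) = i \<and> na (f i) + i = sig f i + nd (f i)"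
  using fam_end[OF assms] by (auto simp: sig_def Q_def)

lemma sig_inj: assumes "f \<in> families m" shows "inj_on (sig f) {..<m}"
proof
  fix i j assume "i \<in> {..<m}" "j \<in> {..<m}" "sig f i = sig f j"
  then have "path_end (P i) (f i) = path_end (P j) (f j)" "i < m" "j < m"
    using sig_prop[OF assms, of i] sig_prop[OF assms, of j] by auto
  then show "i = j" using assms unfolding families_def by blast
qed

lemma sig_surj: assumes "f \<in> families m" shows "sig f ` {..<m} = {..<m}"
  by (rule endo_inj_surj) (use sig_prop[OF assms] sig_inj[OF assms] in auto)

lemma Af_nonneg: assumes "f \<in> families m" "\<And>y. y \<ge> 1 \<Longrightarrow> c y \<ge> 0"
  shows "Af c m f \<ge> 0"
  unfolding Af_def
proof (rule prod_nonneg)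
  fix i assume "i \<in> {..<m}"
  then have "nd (f i) + nf (f i) = i" using sig_prop[OF assms(1)] by auto
  then show "dw c (P i) (f i) \<ge> 0" by (intro dw_nonneg assms(2)) (auto simp: P_def)
qed

lemma Ff_le: assumes "f \<in> families m" shows "Ff m f \<le> (\<Sum>i<m. i)"
  unfolding Ff_def by (rule sum_mono) (use sig_prop[OF assms] in fastforce)

lemma flat_only: "na ss = 0 \<Longrightarrow> nd ss = 0 \<Longrightarrow> ss = replicate (nf ss) Flat"
  by (induction ss rule: na.induct) auto
lemma asc_only: "nf ss = 0 \<Longrightarrow> nd ss = 0 \<Longrightarrow> ss = replicate (na ss) Asc"
  by (induction ss rule: na.induct) auto
lemma desc_only: "nf ss = 0 \<Longrightarrow> na ss = 0 \<Longrightarrow> ss = replicate (nd ss) Desc"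
  by (induction ss rule: na.induct) auto

lemma top_unique: assumes f: "f \<in> families m" and F: "Ff m f = (\<Sum>i<m. i)"
  shows "f = famr m m m"
proof -
  have nfi: "nf (f i) = i" if "i < m" for i
  proof (rule ccontr)
    assume "nf (f i) \<noteq> i"
    then have "nf (f i) < i" using sig_prop[OF f that] by auto
    then have "Ff m f < (\<Sum>i<m. i)" unfolding Ff_def
      by (intro sum_strict_mono_ex1) (use sig_prop[OF f] that in fastforce)+
    then show False using F by simp
  qed
  have ge: "i \<le> sig f i" if "i < m" for i using sig_prop[OF f that] nfi[OF that] by auto
  have "(\<Sum>i<m. sig f i) = (\<Sum>i<m. i)"
    using sum.reindex[OF sig_inj[OF f], of id] sig_surj[OF f] by simp
  then have eq: "sig f i = i" if "i < m" for i
  proof -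
    { assume "sig f i \<noteq> i"
      then have "i < sig f i" using ge[OF that] by auto
      then have "(\<Sum>i<m. i) < (\<Sum>i<m. sig f i)"
        by (intro sum_strict_mono_ex1) (use ge that in auto)
      then have False using \<open>(\<Sum>i<m. sig f i) = (\<Sum>i<m. i)\<close> by simp }
    then show ?thesis by blast
  qed
  show ?thesis
  proof
    fix i show "f i = famr m m m i"
    proof (cases "i < m")
      case True
      have "nd (f i) = 0" "na (f i) = 0" using sig_prop[OF f True] nfi[OF True] eq[OF True] by auto
      then have "f i = replicate i Flat" using flat_only nfi[OF True] by metis
      then show ?thesis using True by (simp add: famr_def gg_def sh_def)
    next
      case False then show ?thesis using f unfolding families_def famr_def by auto
    qed
  qed
qed



lemma split0: "nf ss = 0 \<Longrightarrow> fst a \<le> 0 \<Longrightarrow> 0 \<le> fst (path_end a ss) \<Longrightarrow>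
   \<exists>s1 s2. ss = s1 @ s2 \<and> fst (path_end a s1) = 0"
proof (induction ss arbitrary: a)
  case Nil then show ?case by (intro exI[of _ "[]"] exI[of _ "[]"]) auto
next
  case (Cons s ss)
  show ?case
  proof (cases "fst a = 0")
    case True then show ?thesis by (intro exI[of _ "[]"] exI[of _ "s # ss"]) auto
  next
    case False
    obtain x y where a: "a = (x,y)" by force
    have sF: "s \<noteq> Flat" using Cons.prems by (cases s) auto
    have "fst (step_move a s) = x + 1" using sF by (cases s) (auto simp: a)
    moreover have "nf ss = 0" using Cons.prems sF by (cases s) auto
    ultimately obtain s1 s2 where "ss = s1 @ s2" "fst (path_end (step_move a s) s1) = 0"
      using Cons.IH[of "step_move a s"] Cons.prems False a by auto
    then show ?thesis by (intro exI[of _ "s # s1"] exI[of _ s2]) auto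
  qed
qed

lemma pv_mid: "path_end a s1 \<in> path_vertices a (s1 @ s2)"
  by (simp add: pv_app end_in_pv)

lemma tent_mid: "(0, 2 * int k) \<in> path_vertices (P k) (sh k 0)"
proof -
  have "sh k 0 = replicate k Asc @ replicate k Desc" by (simp add: sh_def)
  moreover have "path_end (P k) (replicate k Asc) = (0, 2 * int k)" by (simp add: P_def path_end_formula)
  ultimately show ?thesis using pv_mid by metis
qed

lemma tent_unique:
  assumes f: "f \<in> families m" and nf0: "\<And>i. i < m \<Longrightarrow> nf (f i) = 0"
  shows "i < m \<Longrightarrow> f i = sh i 0"
proof (induction i rule: less_induct)
  case (less i)
  have disj: "path_vertices (P a) (f a) \<inter> path_vertices (P b) (f b) = {}" if "a < m" "b < m" "a \<noteq> b" for a b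
    using f that unfolding families_def by blast
  obtain j where j: "j < m" "path_end (P i) (f i) = Q j" using sig_prop[OF f less.prems] by blast
  obtain s1 s2 where s12: "f i = s1 @ s2" "fst (path_end (P i) s1) = 0"
    using split0[of "f i" "P i"] nf0[OF less.prems] j by (auto simp: P_def Q_def)
  have nfs1: "nf s1 = 0" "nf s2 = 0" using nf0[OF less.prems] s12 by auto
  have pe1: "path_end (P i) s1 = (0, int i + int (na s1) - int (nd s1))" "na s1 + nd s1 = i"
    using s12(2) nfs1 by (auto simp: P_def path_end_formula)
  have eq: "int i + int (na s1) - int (nd s1) = 2 * int (na s1)" using pe1(2) by linarith
  have mid1: "(0, 2 * int (na s1)) \<in> path_vertices (P i) (f i)"
    using pv_mid[of "P i" s1 s2] s12(1) pe1(1) eq by metis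
  have na1: "na s1 = i"
  proof (rule ccontr)
    assume "na s1 \<noteq> i"
    then have lt: "na s1 < i" using pe1 by auto
    then have "f (na s1) = sh (na s1) 0" using less.IH less.prems by auto
    then have "(0, 2 * int (na s1)) \<in> path_vertices (P (na s1)) (f (na s1))" using tent_mid by simp
    then show False using mid1 disj[of i "na s1"] lt less.prems by auto
  qed
  have nd1: "nd s1 = 0" using pe1 na1 by simp
  have mid: "(0, 2 * int i) \<in> path_vertices (P i) (f i)" using mid1 na1 by simp
  have "i \<in> sig f ` {..<m}" using sig_surj[OF f] less.prems by simp
  then obtain k where k: "k < m" "sig f k = i" by auto
  have kend: "path_end (P k) (f k) = Q i" using sig_prop[OF f k(1)] k by simp
  have "k \<ge> i"
  proof (rule ccontr)
    assume "\<not> k \<ge> i"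
    then have "f k = sh k 0" using less.IH k by auto
    then have "path_end (P k) (f k) = Q k" using sh_end by simp
    then show False using kend \<open>\<not> k \<ge> i\<close> by (simp add: Q_def)
  qed
  obtain t1 t2 where t12: "f k = t1 @ t2" "fst (path_end (P k) t1) = 0"
    using split0[of "f k" "P k"] nf0[OF k(1)] kend by (auto simp: P_def Q_def)
  have nft: "nf t1 = 0" "nf t2 = 0" using nf0[OF k(1)] t12 by auto
  obtain y where y: "path_end (P k) t1 = (0, y)" using t12(2) by (metis prod.collapse)
  have "path_end (0, y) t2 = Q i" using kend t12 y by simp
  then have pe2: "na t2 + nd t2 = i" "y = 2 * int (nd t2)" using nft by (auto simp: Q_def path_end_formula)
  have midk1: "(0, 2 * int (nd t2)) \<in> path_vertices (P k) (f k)"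
    using pv_mid[of "P k" t1 t2] t12 y pe2 by simp
  have nd2: "nd t2 = i"
  proof (rule ccontr)
    assume "nd t2 \<noteq> i"
    then have lt: "nd t2 < i" using pe2 by auto
    then have "f (nd t2) = sh (nd t2) 0" using less.IH less.prems by auto
    then have "(0, 2 * int (nd t2)) \<in> path_vertices (P (nd t2)) (f (nd t2))" using tent_mid by simp
    then show False using midk1 disj[of k "nd t2"] lt less.prems \<open>k \<ge> i\<close> k by auto
  qed
  have "k = i"
  proof (rule ccontr)
    assume "k \<noteq> i"
    then show False using disj[of i k] mid midk1 nd2 k less.prems by auto
  qed
  have "path_end (0, 2 * int i) s2 = Q i" using kend \<open>k = i\<close> s12 pe1 na1 nd1 by simp
  then have "na s2 = 0" "nd s2 = i" using nfs1 by (auto simp: Q_def path_end_formula)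
  then have "s2 = replicate i Desc" using desc_only nfs1 by metis
  moreover have "s1 = replicate i Asc" using asc_only nfs1 nd1 na1 by metis
  ultimately show ?case using s12 by (simp add: sh_def)
qed

lemma tent_unique': assumes f: "f \<in> families m" and F: "Ff m f = 0"
  shows "f = famr 0 0 m"
proof
  fix i
  have nf0: "\<And>i. i < m \<Longrightarrow> nf (f i) = 0" using F by (simp add: Ff_def)
  show "f i = famr 0 0 m i"
  proof (cases "i < m")
    case True then show ?thesis using tent_unique[OF f nf0 True] by (simp add: famr_def gg_def)
  next
    case False then show ?thesis using f unfolding families_def famr_def by auto
  qed
qed



lemma gg_sum: "r < m \<Longrightarrow> (\<Sum>i<m. gg r v i) = (\<Sum>i<r. i) + v"
proof (induction m)
  case 0 then show ?case by simp
next
  case (Suc m)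
  show ?case
  proof (cases "m = r")
    case True
    have "(\<Sum>i<r. gg r v i) = (\<Sum>i<r. i)" by (rule sum.cong) (auto simp: gg_def)
    then show ?thesis using True by (simp add: gg_def)
  next
    case False then have "r < m" using Suc.prems by simp
    then show ?thesis using Suc.IH by (simp add: gg_def)
  qed
qed

lemma ex_rv: "1 \<le> (m::nat) \<Longrightarrow> k \<le> (\<Sum>i<m. i) \<Longrightarrow> \<exists>r<m. \<exists>v\<le>r. k = (\<Sum>i<r. i) + v"
proof (induction m)
  case 0 then show ?case by simp
next
  case (Suc m)
  show ?case
  proof (cases "m = 0")
    case True then show ?thesis using Suc.prems by auto
  next
    case False
    show ?thesis
    proof (cases "k \<le> (\<Sum>i<m. i)")
      case True
      then obtain r v where "r < m" "v \<le> r" "k = (\<Sum>i<r. i) + v" using Suc.IH False by (metis less_one not_le)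
      then show ?thesis using less_SucI by blast
    next
      case F2: False
      then show ?thesis using Suc.prems by (intro exI[of _ m]) (auto intro!: exI[of _ "k - (\<Sum>i<m. i)"])
    qed
  qed
qed

lemma ex_famr: "k \<le> (\<Sum>i<(m::nat). i) \<Longrightarrow> \<exists>r v. v \<le> r \<and> (\<Sum>i<m. gg r v i) = k"
proof (cases "m = 0")
  case True then show "k \<le> (\<Sum>i<m. i) \<Longrightarrow> ?thesis" by (intro exI[of _ 0]) auto
next
  case False
  assume "k \<le> (\<Sum>i<m. i)"
  then obtain r v where "r < m" "v \<le> r" "k = (\<Sum>i<r. i) + v" using ex_rv False by (metis less_one not_le)
  then show ?thesis using gg_sum by metis
qed

lemma Af_famr: "v \<le> r \<Longrightarrow> Af c m (famr r v m) = (\<Prod>i<m. \<Prod>s<i - gg r v i. c (2 * int i - int (gg r v i) - int s))"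
  unfolding Af_def by (rule prod.cong) (auto simp: famr_def sh_dw gg_le)

lemma Ff_famr: "v \<le> r \<Longrightarrow> Ff m (famr r v m) = (\<Sum>i<m. gg r v i)"
  unfolding Ff_def by (rule sum.cong) (auto simp: famr_def sh_counts gg_le)

lemma Af_famr_pos: assumes "v \<le> r" "\<And>y. y \<ge> 2 \<Longrightarrow> c y > 0" shows "Af c m (famr r v m) > 0"
  unfolding Af_famr[OF assms(1)]
proof (intro prod_pos ballI)
  fix i s assume "i \<in> {..<m}" "s \<in> {..<i - gg r v i}"
  then have "2 * int i - int (gg r v i) - int s \<ge> 2" using gg_le[OF assms(1), of i] by auto
  then show "c (2 * int i - int (gg r v i) - int s) > 0" using assms(2) by blast
qed

lemma generic:
  fixes m :: nat and c :: "int \<Rightarrow> int"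
  assumes c1: "\<And>y. y \<ge> 1 \<Longrightarrow> c y \<ge> 0" and c2: "\<And>y. y \<ge> 2 \<Longrightarrow> c y > 0"
  defines "Pc \<equiv> (\<Sum>f\<in>families m. \<Prod>i<m. path_weight c (P i) (f i))"
  shows "lead_coeff Pc = 1 \<and> degree Pc = (\<Sum>i<m. i) \<and> (\<forall>k \<le> (\<Sum>i<m. i). coeff Pc k > 0)
     \<and> coeff Pc 0 = (\<Prod>i<m. \<Prod>s<i. c (2 * int i - int s))"
proof -
  let ?T = "\<Sum>i<m. i"
  let ?S = "families m"
  have fin: "finite ?S" by (rule families_finite)
  have cf: "coeff Pc k = (\<Sum>f\<in>?S. if Ff m f = k then Af c m f else 0)" for k
    unfolding Pc_def by (rule coeff_Pc)
  have top_in: "famr m m m \<in> ?S" by (rule famr_in) simp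
  have topF: "Ff m (famr m m m) = ?T" by (simp add: Ff_famr) (rule sum.cong, auto simp: gg_def)
  have topA: "Af c m (famr m m m) = 1" by (simp add: Af_famr) (rule prod.neutral, auto simp: gg_def)
  have cT: "coeff Pc ?T = 1"
  proof -
    have "coeff Pc ?T = (\<Sum>f\<in>?S. if f = famr m m m then 1 else 0)"
      unfolding cf
    proof (rule sum.cong)
      fix f assume f: "f \<in> ?S"
      show "(if Ff m f = ?T then Af c m f else 0) = (if f = famr m m m then 1 else 0)"
      proof (cases "f = famr m m m")
        case True then show ?thesis using topF topA by simp
      next
        case False then have "Ff m f \<noteq> ?T" using top_unique[OF f] by blast
        then show ?thesis using False by simp
      qed
    qed simp
    then show ?thesis using fin top_in by simp
  qed
  have cbig: "coeff Pc k = 0" if "k > ?T" for k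
    unfolding cf
  proof (rule sum.neutral, rule ballI)
    fix f assume "f \<in> ?S"
    then have "Ff m f \<noteq> k" using Ff_le[of f m] that by linarith
    then show "(if Ff m f = k then Af c m f else 0) = 0" by simp
  qed
  have deg: "degree Pc = ?T"
  proof (rule antisym)
    show "degree Pc \<le> ?T" by (rule degree_le) (use cbig in blast)
    show "?T \<le> degree Pc" by (rule le_degree) (simp add: cT)
  qed
  have pos: "coeff Pc k > 0" if kT: "k \<le> ?T" for k
  proof -
    obtain r v where rv: "v \<le> r" "(\<Sum>i<m. gg r v i) = k" using ex_famr[OF kT] by blast
    have "0 < (if Ff m (famr r v m) = k then Af c m (famr r v m) else 0)"
    proof -
      have "Ff m (famr r v m) = k" using Ff_famr[OF rv(1)] rv(2) by simp
      moreover have "Af c m (famr r v m) > 0" by (rule Af_famr_pos[OF rv(1) c2])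
      ultimately show ?thesis by simp
    qed
    also have "\<dots> \<le> (\<Sum>f\<in>?S. if Ff m f = k then Af c m f else 0)"
    proof (rule member_le_sum)
      show "famr r v m \<in> ?S" by (rule famr_in[OF rv(1)])
      show "finite ?S" by (rule fin)
      fix f assume fS: "f \<in> ?S - {famr r v m}"
      have "Af c m f \<ge> 0" by (rule Af_nonneg) (use fS c1 in auto)
      then show "0 \<le> (if Ff m f = k then Af c m f else 0)" by simp
    qed
    finally show ?thesis by (simp only: cf)
  qed
  have tent_in: "famr 0 0 m \<in> ?S" by (rule famr_in) simp
  have tentF: "Ff m (famr 0 0 m) = 0" by (simp add: Ff_famr gg_def)
  have tentA: "Af c m (famr 0 0 m) = (\<Prod>i<m. \<Prod>s<i. c (2 * int i - int s))"
    by (simp add: Af_famr) (rule prod.cong, auto simp: gg_def)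
  have c0: "coeff Pc 0 = (\<Prod>i<m. \<Prod>s<i. c (2 * int i - int s))"
  proof -
    have "coeff Pc 0 = (\<Sum>f\<in>?S. if f = famr 0 0 m then Af c m (famr 0 0 m) else 0)"
      unfolding cf
    proof (rule sum.cong)
      fix f assume f: "f \<in> ?S"
      show "(if Ff m f = 0 then Af c m f else 0) = (if f = famr 0 0 m then Af c m (famr 0 0 m) else 0)"
      proof (cases "f = famr 0 0 m")
        case True then show ?thesis using tentF by simp
      next
        case False then have "Ff m f \<noteq> 0" using tent_unique'[OF f] by blast
        then show ?thesis using False by simp
      qed
    qed simp
    then show ?thesis using fin tent_in tentA by simp
  qed
  show ?thesis using cT deg pos c0 by simp
qed



lemma fact_prod: "(fact n :: int) * (\<Prod>s<k. int (n + k) - int s) = fact (n + k)"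
proof (induction k)
  case 0 then show ?case by simp
next
  case (Suc k)
  have "(\<Prod>s<Suc k. int (n + Suc k) - int s) = (int (n + Suc k)) * (\<Prod>s<k. int (n + Suc k) - int (Suc s))"
    by (simp only: prod.lessThan_Suc_shift) simp
  also have "(\<Prod>s<k. int (n + Suc k) - int (Suc s)) = (\<Prod>s<k. int (n + k) - int s)"
    by (rule prod.cong) auto
  finally have "(fact n :: int) * (\<Prod>s<Suc k. int (n + Suc k) - int s) = int (n + Suc k) * (fact n * (\<Prod>s<k. int (n + k) - int s))"
    by (simp only: mult.left_commute)
  also have "\<dots> = int (n + Suc k) * fact (n + k)" using Suc by (simp only:)
  also have "\<dots> = fact (n + Suc k)" by (simp add: fact_Suc)
  finally show ?case .
qed

lemma gauss2: "2 * (\<Sum>i<(m::nat). i) = m * (m - 1)"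
proof (induction m)
  case 0 then show ?case by simp
next
  case (Suc m) then show ?case by (cases m) (auto simp: algebra_simps)
qed

lemma NzDz: "(\<Prod>i<p+2. \<Prod>s<i. 2 * int i - int s - 1) = (fact (2*p+1) :: int) * (\<Prod>i<p. \<Prod>s<i. 2 * int i - int s + 1)"
proof (induction p)
  case 0 then show ?case by (simp add: numeral_2_eq_2)
next
  case (Suc p)
  define G where "G = (\<Prod>s<p+2. 2 * int (p+2) - int s - 1)"
  define H where "H = (\<Prod>s<p. 2 * int p - int s + 1)"
  have G: "fact (p+1) * G = (fact (2*p+3) :: int)"
  proof -
    have "G = (\<Prod>s<p+2. int ((p+1) + (p+2)) - int s)" unfolding G_def by (rule prod.cong) auto
    then have "fact (p+1) * G = (fact ((p+1) + (p+2)) :: int)" using fact_prod[of "p+1" "p+2"] by (simp only:)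
    moreover have "(p+1) + (p+2) = 2*p+3" by simp
    ultimately show ?thesis by (simp only:)
  qed
  have H: "fact (p+1) * H = (fact (2*p+1) :: int)"
  proof -
    have "H = (\<Prod>s<p. int ((p+1) + p) - int s)" unfolding H_def by (rule prod.cong) auto
    then have "fact (p+1) * H = (fact ((p+1) + p) :: int)" using fact_prod[of "p+1" "p"] by (simp only:)
    moreover have "(p+1) + p = 2*p+1" by simp
    ultimately show ?thesis by (simp only:)
  qed
  have L: "(\<Prod>i<Suc p+2. \<Prod>s<i. 2 * int i - int s - 1) = (\<Prod>i<p+2. \<Prod>s<i. 2 * int i - int s - 1) * G"
    unfolding G_def by (simp add: algebra_simps)
  have R: "(\<Prod>i<Suc p. \<Prod>s<i. 2 * int i - int s + 1) = (\<Prod>i<p. \<Prod>s<i. 2 * int i - int s + 1) * H"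
    unfolding H_def by simp
  define X where "X = (\<Prod>i<p. \<Prod>s<i. 2 * int i - int s + 1)"
  have nz: "(fact (p+1) :: int) \<noteq> 0" by simp
  have a: "fact (p+1) * ((fact (2*p+1) :: int) * X * G) = fact (2*p+1) * X * fact (2*p+3)"
  proof -
    have "fact (p+1) * ((fact (2*p+1) :: int) * X * G) = fact (2*p+1) * X * (fact (p+1) * G)" by (simp only: mult_ac)
    then show ?thesis using G by simp
  qed
  have b: "fact (p+1) * ((fact (2*p+3) :: int) * (X * H)) = fact (2*p+3) * X * fact (2*p+1)"
  proof -
    have "fact (p+1) * ((fact (2*p+3) :: int) * (X * H)) = fact (2*p+3) * X * (fact (p+1) * H)" by (simp only: mult_ac)
    then show ?thesis using H by simp
  qed
  have "fact (p+1) * ((fact (2*p+1) :: int) * X * G) = fact (p+1) * ((fact (2*p+3) :: int) * (X * H))"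
    unfolding a b by (simp only: mult_ac)
  then have E: "(fact (2*p+1) :: int) * X * G = fact (2*p+3) * (X * H)" using nz by simp
  have e3: "2 * Suc p + 1 = 2*p+3" by simp
  show ?case unfolding L R Suc.IH e3 using E unfolding X_def by simp
qed

theorem theorem6p3:
  fixes p :: nat
  defines "n \<equiv> 2 * p + 1"
  shows "lead_coeff (Npoly p) = 1
       \<and> degree (Npoly p) = (p + 1) * (p + 2) div 2
       \<and> (\<forall>i \<le> (p + 1) * (p + 2) div 2. coeff (Npoly p) i > 0)
       \<and> lead_coeff (Dpoly p) = 1
       \<and> degree (Dpoly p) = p * (p - 1) div 2
       \<and> (\<forall>i \<le> p * (p - 1) div 2. coeff (Dpoly p) i > 0)
       \<and> poly (Npoly p) 0 = int (fact n) * poly (Dpoly p) 0"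
proof -
  have eN: "Npoly p = (\<Sum>f\<in>families (p+2). \<Prod>i<p+2. path_weight (\<lambda>y. y - 1) (P i) (f i))"
    unfolding Npoly_def W2_def ..
  have eD: "Dpoly p = (\<Sum>f\<in>families p. \<Prod>i<p. path_weight (\<lambda>y. y + 1) (P i) (f i))"
    unfolding Dpoly_def W0_def ..
  have N: "lead_coeff (Npoly p) = 1 \<and> degree (Npoly p) = (\<Sum>i<p+2. i) \<and> (\<forall>k \<le> (\<Sum>i<p+2. i). coeff (Npoly p) k > 0)
     \<and> coeff (Npoly p) 0 = (\<Prod>i<p+2. \<Prod>s<i. 2 * int i - int s - 1)"
    by (rule generic[of "\<lambda>y. y - 1" "p+2", folded eN]) auto
  have D: "lead_coeff (Dpoly p) = 1 \<and> degree (Dpoly p) = (\<Sum>i<p. i) \<and> (\<forall>k \<le> (\<Sum>i<p. i). coeff (Dpoly p) k > 0)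
     \<and> coeff (Dpoly p) 0 = (\<Prod>i<p. \<Prod>s<i. 2 * int i - int s + 1)"
    by (rule generic[of "\<lambda>y. y + 1" "p", folded eD]) auto
  have s1: "(\<Sum>i<p+2. i) = (p + 1) * (p + 2) div 2" using gauss2[of "p+2"] by simp
  have s2: "(\<Sum>i<p. i) = p * (p - 1) div 2" using gauss2[of p] by simp
  have z: "poly (Npoly p) 0 = int (fact n) * poly (Dpoly p) 0"
  proof -
    have N0: "coeff (Npoly p) 0 = (\<Prod>i<p+2. \<Prod>s<i. 2 * int i - int s - 1)" using N by blast
    have D0: "coeff (Dpoly p) 0 = (\<Prod>i<p. \<Prod>s<i. 2 * int i - int s + 1)" using D by blast
    have "poly (Npoly p) 0 = (\<Prod>i<p+2. \<Prod>s<i. 2 * int i - int s - 1)" by (simp only: poly_0_coeff_0 N0)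
    also have "\<dots> = fact (2*p+1) * (\<Prod>i<p. \<Prod>s<i. 2 * int i - int s + 1)" by (rule NzDz)
    also have "\<dots> = int (fact n) * poly (Dpoly p) 0" by (simp only: poly_0_coeff_0 D0 n_def of_nat_fact)
    finally show ?thesis .
  qed
  show ?thesis using N D z unfolding s1 s2 by blast
qed


end
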